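(* The set $\mathcal{IFR}$ of relay rules (Relay Introduction, Relay Fusion, Relay Reversal) preserves weak connectivity: if any rule of $\mathcal{IFR}$ is applied to a weakly connected (valid) relay graph $G$, then the resulting relay graph $G'$ is also weakly connected.
   Context: Relay model. There is a set $P$ of processes. Each process owns a set of relays (owned non-transferably). Every relay $r$ has exactly one outgoing connection: either $r$ is a sink relay (its messages are delivered to its owning process) or its outgoing connection points to another relay. Following outgoing connections from any relay never cycles and ends at a unique sink relay; the owner of that sink relay is called the sink process of $r$. A process $u$ "has a relay $r$ to" a process $v$ if $u$ owns $r$ (or a message in transit to $u$ will give it such a relay upon receipt) and $v$ is the sink process of $r$. $\mathrm{incoming}(r)$ is the number of connections into $r$ (relays pointing to $r$, including pending ones created by references to $r$ in transit); $\mathrm{same\text{-}target}(r,r')$ holds iff $r$ and $r'$ have the same outgoing target. A process may at any time create a new sink relay with no incoming connections. When a process $u$ sends (a reference to) a relay $s$ it owns via a relay $r$ it owns, the message travels along the chain of relays starting at $r$; upon receipt, the sink process of $r$ obtains a new relay $s'$ whose outgoing connection points to $s$ (so $\mathrm{incoming}(s)$ increases). Deleting a relay removes it and its outgoing connection (after pending messages have been delivered). Merging relays with the same target and no incoming connections replaces them by a single relay with that target. Relay graph: directed graph with vertex set $P\cup R$ ($R$ the set of relays) and edges: $(v,r)$ if process $v$ owns relay $r$; $(r,w)$ for relays $r,w$ if the outgoing connection of $r$ points to $w$; $(r,w)$ for a sink relay $r$ and its owning process $w$ (explicit edges); and an implicit edge $(r,w)$ between relays if a message waiting in $r$'s outgoing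 buffer contains a reference to $w$. Weak connectivity refers to the underlying undirected graph. Rules $\mathcal{IFR}$: (Relay Introduction) if $u$ has a relay $r$ to $v$ and a relay $s$ to $w$, then $u$ may send $s$ to $v$ via $r$ (keeping all relays). (Relay Fusion) if $u$ has two relays $r,r'$ with $\mathrm{same\text{-}target}(r,r')$, $u$ may merge them. (Relay Reversal) if $u$ has two relays $r\neq s$ with $\mathrm{incoming}(r)=0$, $u$ may send $s$ via $r$ and subsequently delete $r$. *)

theory Defs
  imports Main
begin

text \<open>Processes have type 'p, relays type 'r.
  procs = P, rels = R, own r = owning process of r,
  out r = None if r is a sink relay, Some w if the outgoing connection of r points to relay w,
  buf r = references to relays contained in the messages waiting in r's outgoing buffer.\<close>

record ('p, 'r) rstate =
  procs :: "'p set"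
  rels  :: "'r set"
  own   :: "'r \<Rightarrow> 'p"
  out   :: "'r \<Rightarrow> 'r option"
  buf   :: "'r \<Rightarrow> 'r list"

definition chain :: "('p, 'r) rstate \<Rightarrow> ('r \<times> 'r) set" where
  "chain G = {(r, w). r \<in> rels G \<and> out G r = Some w}"

definition valid :: "('p, 'r) rstate \<Rightarrow> bool" where
  "valid G \<longleftrightarrow> finite (rels G) \<and> own G ` rels G \<subseteq> procs G
     \<and> (\<forall>r\<in>rels G. \<forall>w. out G r = Some w \<longrightarrow> w \<in> rels G)
     \<and> (\<forall>r\<in>rels G. set (buf G r) \<subseteq> rels G)
     \<and> acyclic (chain G)"

text \<open>incoming r: connections into r, including pending ones (references to r in transit).\<close>
definition incoming :: "('p, 'r) rstate \<Rightarrow> 'r \<Rightarrow> nat" where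
  "incoming G r = card {w \<in> rels G. out G w = Some r}
     + (\<Sum>w\<in>rels G. length (filter (\<lambda>x. x = r) (buf G w)))"

definition sink_process :: "('p, 'r) rstate \<Rightarrow> 'r \<Rightarrow> 'p \<Rightarrow> bool" where
  "sink_process G r v \<longleftrightarrow> (\<exists>w. (r, w) \<in> (chain G)\<^sup>* \<and> w \<in> rels G \<and> out G w = None \<and> own G w = v)"

definition relay_to :: "('p, 'r) rstate \<Rightarrow> 'p \<Rightarrow> 'r \<Rightarrow> 'p \<Rightarrow> bool" where
  "relay_to G u r v \<longleftrightarrow> r \<in> rels G \<and> own G r = u \<and> sink_process G r v"

definition same_target :: "('p, 'r) rstate \<Rightarrow> 'r \<Rightarrow> 'r \<Rightarrow> bool" where
  "same_target G r r' \<longleftrightarrow> out G r = out G r' \<and> (out G r = None \<longrightarrow> own G r = own G r')"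

definition vertices :: "('p, 'r) rstate \<Rightarrow> ('p + 'r) set" where
  "vertices G = Inl ` procs G \<union> Inr ` rels G"

definition edges :: "('p, 'r) rstate \<Rightarrow> (('p + 'r) \<times> ('p + 'r)) set" where
  "edges G =
      {(Inl (own G r), Inr r) | r. r \<in> rels G}
    \<union> {(Inr r, Inr w) | r w. r \<in> rels G \<and> out G r = Some w}
    \<union> {(Inr r, Inl (own G r)) | r. r \<in> rels G \<and> out G r = None}
    \<union> {(Inr r, Inr w) | r w. r \<in> rels G \<and> w \<in> set (buf G r)}"

definition weakly_connected :: "('p, 'r) rstate \<Rightarrow> bool" where
  "weakly_connected G \<longleftrightarrow>
     (\<forall>a\<in>vertices G. \<forall>b\<in>vertices G.
        (a, b) \<in> ((edges G \<union> (edges G)\<inverse>) \<inter> (vertices G \<times> vertices G))\<^sup>*)"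

definition intro_step :: "('p, 'r) rstate \<Rightarrow> ('p, 'r) rstate \<Rightarrow> bool" where
  "intro_step G G' \<longleftrightarrow> (\<exists>u r s v w. relay_to G u r v \<and> relay_to G u s w \<and>
      G' = G\<lparr>buf := (buf G)(r := buf G r @ [s])\<rparr>)"

definition fusion_step :: "('p, 'r) rstate \<Rightarrow> ('p, 'r) rstate \<Rightarrow> bool" where
  "fusion_step G G' \<longleftrightarrow> (\<exists>u r r'. r \<in> rels G \<and> r' \<in> rels G \<and> r \<noteq> r' \<and>
      own G r = u \<and> own G r' = u \<and> same_target G r r' \<and>
      incoming G r = 0 \<and> incoming G r' = 0 \<and>
      G' = G\<lparr>rels := rels G - {r'}, buf := (buf G)(r := buf G r @ buf G r', r' := [])\<rparr>)"

text \<open>Relay Reversal: u has r \<noteq> s with incoming r = 0; u sends s via r and then deletes r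
  after the pending messages of r (including the new one) have been delivered out of r:
  if r points to x they are passed on to x's outgoing buffer; if r is a sink relay they are
  delivered to u, which obtains, for each referenced relay t, a fresh relay pointing to t.\<close>
definition reversal_step :: "('p, 'r) rstate \<Rightarrow> ('p, 'r) rstate \<Rightarrow> bool" where
  "reversal_step G G' \<longleftrightarrow> (\<exists>u r s. r \<in> rels G \<and> s \<in> rels G \<and> r \<noteq> s \<and>
      own G r = u \<and> own G s = u \<and> incoming G r = 0 \<and>
      (let ms = buf G r @ [s] in
        (case out G r of
           Some x \<Rightarrow> G' = G\<lparr>rels := rels G - {r},
                              buf := (buf G)(x := buf G x @ ms, r := [])\<rparr>
         | None \<Rightarrow> (\<exists>ns. distinct ns \<and> length ns = length ms \<and> set ns \<inter> rels G = {} \<and>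
              G' = G\<lparr>rels := (rels G - {r}) \<union> set ns,
                     own := (\<lambda>q. if q \<in> set ns then u else own G q),
                     out := out G ++ map_of (zip ns ms),
                     buf := (\<lambda>q. if q \<in> set ns \<or> q = r then [] else buf G q)\<rparr>))))"

definition IFR_step :: "('p, 'r) rstate \<Rightarrow> ('p, 'r) rstate \<Rightarrow> bool" where
  "IFR_step G G' \<longleftrightarrow> intro_step G G' \<or> fusion_step G G' \<or> reversal_step G G'"

end

theory Submission
  imports Defs
begin

definition WE :: "('p, 'r) rstate \<Rightarrow> (('p + 'r) \<times> ('p + 'r)) set" where
  "WE G = (edges G \<union> (edges G)\<inverse>) \<inter> (vertices G \<times> vertices G)"

lemma sym_WE: "sym (WE G)"
  unfolding WE_def sym_def by blast

lemma WE_star_sym: "(a, b) \<in> (WE G)\<^sup>* \<Longrightarrow> (b, a) \<in> (WE G)\<^sup>*"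
  using sym_rtrancl[OF sym_WE] unfolding sym_def by blast

lemma edge_WE: "(a, b) \<in> edges G \<Longrightarrow> a \<in> vertices G \<Longrightarrow> b \<in> vertices G \<Longrightarrow> (a, b) \<in> (WE G)\<^sup>*"
  unfolding WE_def by blast

lemma edge_WE': "(b, a) \<in> edges G \<Longrightarrow> a \<in> vertices G \<Longrightarrow> b \<in> vertices G \<Longrightarrow> (a, b) \<in> (WE G)\<^sup>*"
  unfolding WE_def by blast

lemma transfer:
  assumes wc: "weakly_connected G"
    and fE: "\<And>a b. (a,b) \<in> edges G \<Longrightarrow> a \<in> vertices G \<Longrightarrow> b \<in> vertices G \<Longrightarrow> (f a, f b) \<in> (WE G')\<^sup>*"
    and cov: "\<And>c. c \<in> vertices G' \<Longrightarrow> \<exists>a\<in>vertices G. (c, f a) \<in> (WE G')\<^sup>*"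
  shows "weakly_connected G'"
proof -
  have stp: "(f a, f b) \<in> (WE G')\<^sup>*" if "(a, b) \<in> WE G" for a b
  proof -
    from that have "(a,b) \<in> edges G \<and> a \<in> vertices G \<and> b \<in> vertices G \<or>
        (b,a) \<in> edges G \<and> a \<in> vertices G \<and> b \<in> vertices G" unfolding WE_def by blast
    then show ?thesis using fE WE_star_sym by blast
  qed
  have path: "(f a, f b) \<in> (WE G')\<^sup>*" if "(a, b) \<in> (WE G)\<^sup>*" for a b
    using that
  proof (induction rule: rtrancl_induct)
    case base then show ?case by simp
  next
    case (step y z)
    then show ?case using step.IH \<open>(y,z) \<in> WE G\<close> by (meson rtrancl_trans stp)
  qed
  show ?thesis unfolding weakly_connected_def
  proof (intro ballI)
    fix c d assume c: "c \<in> vertices G'" and d: "d \<in> vertices G'"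
    obtain a where a: "a \<in> vertices G" "(c, f a) \<in> (WE G')\<^sup>*" using cov[OF c] by blast
    obtain b where b: "b \<in> vertices G" "(d, f b) \<in> (WE G')\<^sup>*" using cov[OF d] by blast
    have "(a, b) \<in> (WE G)\<^sup>*" using wc a b unfolding weakly_connected_def WE_def by blast
    then have "(f a, f b) \<in> (WE G')\<^sup>*" by (rule path)
    moreover have "(f b, d) \<in> (WE G')\<^sup>*" using b WE_star_sym by blast
    ultimately show "(c, d) \<in> ((edges G' \<union> (edges G')\<inverse>) \<inter> (vertices G' \<times> vertices G'))\<^sup>*"
      using a unfolding WE_def[symmetric] by (meson rtrancl_trans)
  qed
qed

lemma incoming0:
  assumes "valid G" "incoming G r = 0"
  shows "\<forall>q\<in>rels G. out G q \<noteq> Some r" "\<forall>q\<in>rels G. r \<notin> set (buf G q)"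
proof -
  have fin: "finite (rels G)" using assms(1) unfolding valid_def by blast
  have "card {w \<in> rels G. out G w = Some r} = 0" using assms(2) unfolding incoming_def by simp
  then have "{w \<in> rels G. out G w = Some r} = {}" using fin by simp
  then show "\<forall>q\<in>rels G. out G q \<noteq> Some r" by blast
  have "(\<Sum>w\<in>rels G. length (filter (\<lambda>x. x = r) (buf G w))) = 0" using assms(2) unfolding incoming_def by simp
  then have "\<forall>w\<in>rels G. length (filter (\<lambda>x. x = r) (buf G w)) = 0" using fin by simp
  then show "\<forall>q\<in>rels G. r \<notin> set (buf G q)" by (simp add: filter_empty_conv) blast
qed

lemma intro_case:
  assumes "weakly_connected G" "intro_step G G'"
  shows "weakly_connected G'"
proof -
  obtain r s where G': "G' = G\<lparr>buf := (buf G)(r := buf G r @ [s])\<rparr>"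
    using assms(2) unfolding intro_step_def by blast
  have V: "vertices G' = vertices G" unfolding G' vertices_def by simp
  have E: "edges G \<subseteq> edges G'" unfolding G' edges_def by auto
  show ?thesis
    by (rule transfer[where f=id, OF assms(1)]) (use V E in \<open>auto intro: edge_WE\<close>)
qed

lemma fusion_case:
  fixes G G' :: "('p, 'r) rstate"
  assumes val: "valid G" and wc: "weakly_connected G" and st: "fusion_step G G'"
  shows "weakly_connected G'"
proof -
  obtain u r r' where r: "r \<in> rels G" and r': "r' \<in> rels G" and ne: "r \<noteq> r'"
    and ow: "own G r = u" "own G r' = u" and stt: "same_target G r r'"
    and i0: "incoming G r = 0" "incoming G r' = 0"
    and G': "G' = G\<lparr>rels := rels G - {r'}, buf := (buf G)(r := buf G r @ buf G r', r' := [])\<rparr>"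
    using st unfolding fusion_step_def by blast
  note I = incoming0[OF val i0(2)]
  have vo: "\<And>q w. q \<in> rels G \<Longrightarrow> out G q = Some w \<Longrightarrow> w \<in> rels G"
    and vb: "\<And>q. q \<in> rels G \<Longrightarrow> set (buf G q) \<subseteq> rels G"
    and vp: "\<And>q. q \<in> rels G \<Longrightarrow> own G q \<in> procs G"
    using val unfolding valid_def by blast+
  define f :: "'p + 'r \<Rightarrow> 'p + 'r" where "f = (\<lambda>x. if x = Inr r' then Inr r else x)"
  have V: "vertices G' = vertices G - {Inr r'}" unfolding G' vertices_def by auto
  have fE: "(f a, f b) \<in> (WE G')\<^sup>*" if e: "(a,b) \<in> edges G" and av: "a \<in> vertices G" and bv: "b \<in> vertices G" for a b
  proof -
    have "(f a, f b) \<in> edges G' \<and> f a \<in> vertices G' \<and> f b \<in> vertices G'"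
      using e[unfolded edges_def]
    proof (elim UnE CollectE exE conjE)
      fix q assume "(a, b) = (Inl (own G q), Inr q)" "q \<in> rels G"
      then show ?thesis unfolding f_def G' edges_def vertices_def using ow r ne vp by auto
    next
      fix q w assume "(a, b) = (Inr q, Inr w)" "q \<in> rels G" "out G q = Some w"
      moreover have "w \<noteq> r'" using I(1) \<open>q \<in> rels G\<close> \<open>out G q = Some w\<close> by blast
      moreover have "w \<in> rels G" using vo \<open>q \<in> rels G\<close> \<open>out G q = Some w\<close> by blast
      ultimately show ?thesis unfolding f_def G' edges_def vertices_def using stt r ne
        unfolding same_target_def by auto
    next
      fix q assume "(a, b) = (Inr q, Inl (own G q))" "q \<in> rels G" "out G q = None"
      then show ?thesis unfolding f_def G' edges_def vertices_def using stt r ne vp ow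
        unfolding same_target_def by auto
    next
      fix q w assume "(a, b) = (Inr q, Inr w)" "q \<in> rels G" "w \<in> set (buf G q)"
      moreover have "w \<noteq> r'" using I(2) \<open>q \<in> rels G\<close> \<open>w \<in> set (buf G q)\<close> by blast
      moreover have "w \<in> rels G" using vb \<open>q \<in> rels G\<close> \<open>w \<in> set (buf G q)\<close> by blast
      ultimately show ?thesis unfolding f_def G' edges_def vertices_def using r ne
        by auto
    qed
    then show ?thesis using edge_WE by blast
  qed
  show ?thesis
  proof (rule transfer[where f=f, OF wc fE])
    fix c assume "c \<in> vertices G'"
    then have "c \<in> vertices G" "f c = c" using V unfolding f_def by auto
    then show "\<exists>a\<in>vertices G. (c, f a) \<in> (WE G')\<^sup>*" by (metis rtrancl_refl)
  qed
qed

lemma rev_some_case: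
  fixes G G' :: "('p, 'r) rstate"
  assumes val: "valid G" and wc: "weakly_connected G"
    and r: "r \<in> rels G" and s: "s \<in> rels G" and ne: "r \<noteq> s"
    and ow: "own G r = u" "own G s = u" and i0: "incoming G r = 0"
    and ox: "out G r = Some x"
    and G': "G' = G\<lparr>rels := rels G - {r}, buf := (buf G)(x := buf G x @ (buf G r @ [s]), r := [])\<rparr>"
  shows "weakly_connected G'"
proof -
  note I = incoming0[OF val i0]
  have vo: "\<And>q w. q \<in> rels G \<Longrightarrow> out G q = Some w \<Longrightarrow> w \<in> rels G"
    and vb: "\<And>q. q \<in> rels G \<Longrightarrow> set (buf G q) \<subseteq> rels G"
    and vp: "\<And>q. q \<in> rels G \<Longrightarrow> own G q \<in> procs G"
    and ac: "acyclic (chain G)"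
    using val unfolding valid_def by blast+
  have xr: "x \<noteq> r"
  proof
    assume "x = r"
    then have "(r, r) \<in> chain G" using r ox unfolding chain_def by auto
    then show False using ac unfolding acyclic_def by blast
  qed
  have x: "x \<in> rels G" using vo r ox by blast
  define f :: "'p + 'r \<Rightarrow> 'p + 'r" where "f = (\<lambda>y. if y = Inr r then Inr x else y)"
  have V: "vertices G' = vertices G - {Inr r}" unfolding G' vertices_def by auto
  have ux: "(Inl u, Inr x) \<in> (WE G')\<^sup>*"
  proof -
    have "(Inl u, Inr s) \<in> (WE G')\<^sup>*"
      by (rule edge_WE) (use s ne ow vp[OF r] in \<open>auto simp: G' edges_def vertices_def\<close>)
    moreover have "(Inr s, Inr x) \<in> (WE G')\<^sup>*"
      by (rule edge_WE') (use s ne x xr in \<open>auto simp: G' edges_def vertices_def\<close>)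
    ultimately show ?thesis by (meson rtrancl_trans)
  qed
  have fE: "(f a, f b) \<in> (WE G')\<^sup>*" if e: "(a,b) \<in> edges G" and av: "a \<in> vertices G" and bv: "b \<in> vertices G" for a b
    using e[unfolded edges_def]
  proof (elim UnE CollectE exE conjE)
    fix q assume "(a, b) = (Inl (own G q), Inr q)" "q \<in> rels G"
    then show ?thesis
    proof (cases "q = r")
      case True then show ?thesis using \<open>(a, b) = _\<close> ux ow unfolding f_def by auto
    next
      case False then show ?thesis using \<open>(a, b) = _\<close> \<open>q \<in> rels G\<close> vp unfolding f_def
        by (intro edge_WE) (auto simp: G' edges_def vertices_def)
    qed
  next
    fix q w assume eq: "(a, b) = (Inr q, Inr w)" and q: "q \<in> rels G" and o: "out G q = Some w"
    have "w \<noteq> r" using I(1) q o by blast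
    moreover have "w \<in> rels G" using vo q o by blast
    ultimately show ?thesis
    proof (cases "q = r")
      case True then show ?thesis using eq o ox \<open>w \<noteq> r\<close> unfolding f_def by auto
    next
      case False then show ?thesis using eq q o \<open>w \<noteq> r\<close> \<open>w \<in> rels G\<close> unfolding f_def
        by (intro edge_WE) (auto simp: G' edges_def vertices_def)
    qed
  next
    fix q assume eq: "(a, b) = (Inr q, Inl (own G q))" and q: "q \<in> rels G" and o: "out G q = None"
    have "q \<noteq> r" using o ox by auto
    then show ?thesis using eq q o vp unfolding f_def
      by (intro edge_WE) (auto simp: G' edges_def vertices_def)
  next
    fix q w assume eq: "(a, b) = (Inr q, Inr w)" and q: "q \<in> rels G" and bw: "w \<in> set (buf G q)"
    have wr: "w \<noteq> r" using I(2) q bw by blast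
    have w: "w \<in> rels G" using vb q bw by blast
    show ?thesis
    proof (cases "q = r")
      case True then show ?thesis using eq bw wr w x xr unfolding f_def
        by (intro edge_WE) (auto simp: G' edges_def vertices_def)
    next
      case False then show ?thesis using eq q bw wr w unfolding f_def
        by (intro edge_WE) (auto simp: G' edges_def vertices_def)
    qed
  qed
  show ?thesis
  proof (rule transfer[where f=f, OF wc fE])
    fix c assume "c \<in> vertices G'"
    then have "c \<in> vertices G" "f c = c" using V unfolding f_def by auto
    then show "\<exists>a\<in>vertices G. (c, f a) \<in> (WE G')\<^sup>*" by (metis rtrancl_refl)
  qed
qed

lemma out_notin:
  assumes "length ns = length ms" "q \<notin> set ns"
  shows "(m ++ map_of (zip ns ms)) q = m q"
proof -
  have "fst ` set (zip ns ms) = set ns" using assms(1) by (metis map_fst_zip set_map)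
  then have "map_of (zip ns ms) q = None"
    using assms by (simp add: map_of_eq_None_iff)
  then show ?thesis by (simp add: map_add_def)
qed

lemma out_in:
  assumes "length ns = length ms" "distinct ns" "w \<in> set ms"
  shows "\<exists>n\<in>set ns. (m ++ map_of (zip ns ms)) n = Some w"
proof -
  obtain i where i: "i < length ms" "ms ! i = w" using assms(3) by (metis in_set_conv_nth)
  have "map_of (zip ns ms) (ns ! i) = Some (ms ! i)" using map_of_zip_nth assms i by metis
  then show ?thesis using i assms(1) by (metis map_add_find_right nth_mem)
qed

lemma rev_none_case:
  fixes G G' :: "('p, 'r) rstate"
  assumes val: "valid G" and wc: "weakly_connected G"
    and r: "r \<in> rels G" and s: "s \<in> rels G" and ne: "r \<noteq> s"
    and ow: "own G r = u" "own G s = u" and i0: "incoming G r = 0"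
    and ox: "out G r = None"
    and ms: "ms = buf G r @ [s]"
    and ns: "distinct ns" "length ns = length ms" "set ns \<inter> rels G = {}"
    and G': "G' = G\<lparr>rels := (rels G - {r}) \<union> set ns,
                     own := (\<lambda>q. if q \<in> set ns then u else own G q),
                     out := out G ++ map_of (zip ns ms),
                     buf := (\<lambda>q. if q \<in> set ns \<or> q = r then [] else buf G q)\<rparr>"
  shows "weakly_connected G'"
proof -
  note I = incoming0[OF val i0]
  have vo: "\<And>q w. q \<in> rels G \<Longrightarrow> out G q = Some w \<Longrightarrow> w \<in> rels G"
    and vb: "\<And>q. q \<in> rels G \<Longrightarrow> set (buf G q) \<subseteq> rels G"
    and vp: "\<And>q. q \<in> rels G \<Longrightarrow> own G q \<in> procs G"
    using val unfolding valid_def by blast+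
  have up: "u \<in> procs G" using vp r ow by blast
  have outq: "out G' q = out G q" if "q \<in> rels G" for q
    using that ns out_notin[OF ns(2)] unfolding G' by auto
  have ownq: "own G' q = own G q" if "q \<in> rels G" for q
    using that ns unfolding G' by auto
  have bufq: "buf G' q = buf G q" if "q \<in> rels G" "q \<noteq> r" for q
    using that ns unfolding G' by auto
  have relsG': "rels G' = (rels G - {r}) \<union> set ns" "procs G' = procs G" unfolding G' by auto
  define f :: "'p + 'r \<Rightarrow> 'p + 'r" where "f = (\<lambda>y. if y = Inr r then Inl u else y)"
  have fE: "(f a, f b) \<in> (WE G')\<^sup>*" if e: "(a,b) \<in> edges G" and av: "a \<in> vertices G" and bv: "b \<in> vertices G" for a b
    using e[unfolded edges_def]
  proof (elim UnE CollectE exE conjE)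
    fix q assume eq: "(a, b) = (Inl (own G q), Inr q)" and q: "q \<in> rels G"
    show ?thesis
    proof (cases "q = r")
      case True then show ?thesis using eq ow unfolding f_def by auto
    next
      case False then show ?thesis using eq q vp[OF q] ownq[OF q] relsG' unfolding f_def
        by (intro edge_WE) (auto simp: edges_def vertices_def)
    qed
  next
    fix q w assume eq: "(a, b) = (Inr q, Inr w)" and q: "q \<in> rels G" and o: "out G q = Some w"
    have "w \<noteq> r" using I(1) q o by blast
    moreover have "w \<in> rels G" using vo q o by blast
    moreover have "q \<noteq> r" using o ox by auto
    ultimately show ?thesis using eq q o outq[OF q] relsG' unfolding f_def
      by (intro edge_WE) (auto simp: edges_def vertices_def)
  next
    fix q assume eq: "(a, b) = (Inr q, Inl (own G q))" and q: "q \<in> rels G" and o: "out G q = None"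
    show ?thesis
    proof (cases "q = r")
      case True then show ?thesis using eq ow unfolding f_def by auto
    next
      case False then show ?thesis using eq q o vp[OF q] ownq[OF q] outq[OF q] relsG' unfolding f_def
        by (intro edge_WE) (auto simp: edges_def vertices_def)
    qed
  next
    fix q w assume eq: "(a, b) = (Inr q, Inr w)" and q: "q \<in> rels G" and bw: "w \<in> set (buf G q)"
    have wr: "w \<noteq> r" using I(2) q bw by blast
    have w: "w \<in> rels G" using vb q bw by blast
    show ?thesis
    proof (cases "q = r")
      case True
      have "w \<in> set ms" using bw True ms by simp
      then have ex: "\<exists>n\<in>set ns. (out G ++ map_of (zip ns ms)) n = Some w"
        by (rule out_in[OF ns(2) ns(1)])
      have oG: "out G' = out G ++ map_of (zip ns ms)" unfolding G' by simp
      obtain n where n: "n \<in> set ns" "out G' n = Some w"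
        using ex unfolding oG[symmetric] by (erule_tac bexE) (rule that)
      have "(Inl u, Inr n) \<in> (WE G')\<^sup>*"
        using n up relsG' by (intro edge_WE) (auto simp: edges_def vertices_def G')
      moreover have "(Inr n, Inr w) \<in> (WE G')\<^sup>*"
        using n w wr relsG' by (intro edge_WE) (auto simp: edges_def vertices_def)
      ultimately show ?thesis using eq True wr unfolding f_def by (auto intro: rtrancl_trans)
    next
      case False then show ?thesis using eq q bw wr w bufq[OF q] relsG' unfolding f_def
        by (intro edge_WE) (auto simp: edges_def vertices_def)
    qed
  qed
  show ?thesis
  proof (rule transfer[where f=f, OF wc fE])
    fix c assume c: "c \<in> vertices G'"
    show "\<exists>a\<in>vertices G. (c, f a) \<in> (WE G')\<^sup>*"
    proof (cases "c \<in> vertices G")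
      case True
      moreover have "c \<noteq> Inr r" using c relsG' ns r unfolding vertices_def by auto
      ultimately show ?thesis unfolding f_def by (metis rtrancl_refl)
    next
      case False
      then obtain n where n: "c = Inr n" "n \<in> set ns"
        using c relsG' unfolding vertices_def by auto
      have "(Inr n, Inl u) \<in> (WE G')\<^sup>*"
        using n up relsG' by (intro edge_WE') (auto simp: edges_def vertices_def G')
      moreover have "Inr r \<in> vertices G" using r unfolding vertices_def by auto
      ultimately show ?thesis using n unfolding f_def by auto
    qed
  qed
qed

theorem theorem5:
  fixes G G' :: "('p, 'r) rstate"
  assumes "valid G"
    and "weakly_connected G"
    and "IFR_step G G'"
  shows "weakly_connected G'"
proof -
  consider "intro_step G G'" | "fusion_step G G'" | "reversal_step G G'"
    using assms(3) unfolding IFR_step_def by blast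
  then show ?thesis
  proof cases
    case 1 then show ?thesis using intro_case assms by blast
  next
    case 2 then show ?thesis using fusion_case assms by blast
  next
    case 3
    then obtain u r s where r: "r \<in> rels G" and s: "s \<in> rels G" and ne: "r \<noteq> s"
      and ow: "own G r = u" "own G s = u" and i0: "incoming G r = 0"
      and c: "case out G r of
           Some x \<Rightarrow> G' = G\<lparr>rels := rels G - {r},
                              buf := (buf G)(x := buf G x @ (buf G r @ [s]), r := [])\<rparr>
         | None \<Rightarrow> (\<exists>ns. distinct ns \<and> length ns = length (buf G r @ [s]) \<and> set ns \<inter> rels G = {} \<and>
              G' = G\<lparr>rels := (rels G - {r}) \<union> set ns,
                     own := (\<lambda>q. if q \<in> set ns then u else own G q),
                     out := out G ++ map_of (zip ns (buf G r @ [s])),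
                     buf := (\<lambda>q. if q \<in> set ns \<or> q = r then [] else buf G q)\<rparr>)"
      unfolding reversal_step_def Let_def by blast
    show ?thesis
    proof (cases "out G r")
      case None
      then obtain ns where "distinct ns" "length ns = length (buf G r @ [s])" "set ns \<inter> rels G = {}"
        "G' = G\<lparr>rels := (rels G - {r}) \<union> set ns,
                     own := (\<lambda>q. if q \<in> set ns then u else own G q),
                     out := out G ++ map_of (zip ns (buf G r @ [s])),
                     buf := (\<lambda>q. if q \<in> set ns \<or> q = r then [] else buf G q)\<rparr>"
        using c by auto
      then show ?thesis
        using rev_none_case[OF assms(1,2) r s ne ow i0 None refl] by blast
    next
      case (Some x)
      then show ?thesis using c rev_some_case[OF assms(1,2) r s ne ow i0 Some] by auto
    qed
  qed
qed

end
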